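(* Let $L$ be a finite lattice, $\varphi\in M_1(L)$, and $a_1,\dots,a_n\in L$ with $n\ge2$. If $a_n\le a_i$ for some $i\le n-1$, then $\Lambda_{a_1,\ldots,a_n}\varphi=\Lambda_{a_1,\ldots,a_{n-1}}\varphi$.
   Context: $L$ is a finite lattice with join $\vee$. $M_1(L)$ is the set of nonnegative monotone real functions on $L$. A path from $a$ to $b$ is a sequence $H=(h_0,\dots,h_m)$ of distinct elements of $L$ with $h_0=a$, $h_m=b$ ($m\ge0$); $\varphi(H)=\sum_{i=0}^m\varphi(h_i)-\sum_{i=1}^m\varphi(h_{i-1}\vee h_i)$; $\lambda(\varphi;a,b)=\max\{\varphi(H): H\text{ a path from }a\text{ to }b\}$. The $\lambda$-difference operator is $\Lambda_a\varphi(x)=\varphi(x)-\lambda(\varphi;a,x)$; it maps $M_1(L)$ into itself. Successive $\lambda$-differences are $\Lambda_{a_1,\ldots,a_n}\varphi=\Lambda_{a_n}(\Lambda_{a_1,\ldots,a_{n-1}}\varphi)$. *)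

theory Defs
  imports Main "HOL.Real"
begin

definition M1 :: "('a::{finite,lattice} \<Rightarrow> real) set" where
  "M1 = {\<phi>. (\<forall>x. 0 \<le> \<phi> x) \<and> mono \<phi>}"

definition paths :: "'a::{finite,lattice} \<Rightarrow> 'a \<Rightarrow> 'a list set" where
  "paths a b = {H. H \<noteq> [] \<and> distinct H \<and> hd H = a \<and> last H = b}"

definition path_val :: "('a::{finite,lattice} \<Rightarrow> real) \<Rightarrow> 'a list \<Rightarrow> real" where
  "path_val \<phi> H = sum_list (map \<phi> H) - sum_list (map (\<lambda>(x, y). \<phi> (sup x y)) (zip H (tl H)))"

definition lam :: "('a::{finite,lattice} \<Rightarrow> real) \<Rightarrow> 'a \<Rightarrow> 'a \<Rightarrow> real" where
  "lam \<phi> a b = Max (path_val \<phi> ` paths a b)"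

definition Lambda :: "'a::{finite,lattice} \<Rightarrow> ('a \<Rightarrow> real) \<Rightarrow> ('a \<Rightarrow> real)" where
  "Lambda a \<phi> = (\<lambda>x. \<phi> x - lam \<phi> a x)"

text \<open>Successive differences: Lambdas [a1,...,an] phi = Lambda an (... (Lambda a1 phi)).\<close>
definition Lambdas :: "'a::{finite,lattice} list \<Rightarrow> ('a \<Rightarrow> real) \<Rightarrow> ('a \<Rightarrow> real)" where
  "Lambdas as \<phi> = fold Lambda as \<phi>"

end

theory Submission
  imports Defs
begin

lemma pv_single: "path_val \<phi> [x] = \<phi> x" by (simp add: path_val_def)
lemma pv_cons2: "path_val \<phi> (x#y#r) = path_val \<phi> (y#r) + \<phi> x - \<phi> (sup x y)"
  by (simp add: path_val_def)

lemma pv_append: "path_val \<phi> (xs @ y # ys) = path_val \<phi> (xs @ [y]) + path_val \<phi> (y # ys) - \<phi> y"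
proof (induction xs)
  case Nil then show ?case by (simp add: pv_single)
next
  case (Cons x xs) then show ?case by (cases xs) (auto simp: pv_cons2 pv_single)
qed

lemma pv_le_last: "mono \<phi> \<Longrightarrow> H \<noteq> [] \<Longrightarrow> path_val \<phi> H \<le> \<phi> (last H)"
proof (induction H)
  case Nil then show ?case by simp
next
  case (Cons x r)
  show ?case
  proof (cases r)
    case Nil then show ?thesis by (simp add: pv_single)
  next
    case (Cons y r')
    have "\<phi> x \<le> \<phi> (sup x y)" using \<open>mono \<phi>\<close> by (simp add: monoD)
    then show ?thesis using Cons.IH Cons.prems Cons by (simp add: pv_cons2)
  qed
qed

lemma pv_le_hd: "mono \<phi> \<Longrightarrow> H \<noteq> [] \<Longrightarrow> path_val \<phi> H \<le> \<phi> (hd H)"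
proof (induction H rule: rev_induct)
  case Nil then show ?case by simp
next
  case (snoc x xs)
  show ?case
  proof (cases "xs = []")
    case True then show ?thesis by (simp add: pv_single)
  next
    case False
    then obtain ys y where xs: "xs = ys @ [y]" using rev_exhaust by blast
    have e: "path_val \<phi> (xs @ [x]) = path_val \<phi> xs + path_val \<phi> [y, x] - \<phi> y"
      using pv_append[of \<phi> ys y "[x]"] xs by simp
    have "\<phi> x \<le> \<phi> (sup y x)" using \<open>mono \<phi>\<close> by (simp add: monoD)
    then have "path_val \<phi> [y, x] \<le> \<phi> y" by (simp add: pv_cons2 pv_single)
    then show ?thesis using e snoc.IH snoc.prems False by simp
  qed
qed

lemma pv_loop: "mono \<phi> \<Longrightarrow> path_val \<phi> (xs @ [c] @ ys @ [c] @ zs) \<le> path_val \<phi> (xs @ [c] @ zs)"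
proof -
  assume m: "mono \<phi>"
  have 1: "path_val \<phi> (xs @ c # (ys @ c # zs)) = path_val \<phi> (xs @ [c]) + path_val \<phi> (c # ys @ c # zs) - \<phi> c"
    by (rule pv_append)
  have 2: "path_val \<phi> ((c # ys) @ c # zs) = path_val \<phi> ((c # ys) @ [c]) + path_val \<phi> (c # zs) - \<phi> c"
    by (rule pv_append)
  have 3: "path_val \<phi> ((c # ys) @ [c]) \<le> \<phi> c" using pv_le_last[OF m, of "(c # ys) @ [c]"] by simp
  have 4: "path_val \<phi> (xs @ c # zs) = path_val \<phi> (xs @ [c]) + path_val \<phi> (c # zs) - \<phi> c"
    by (rule pv_append)
  show ?thesis using 1 2 3 4 by simp
qed

lemma dedup: "mono \<phi> \<Longrightarrow> H \<noteq> [] \<Longrightarrow> \<exists>H'. H' \<in> paths (hd H) (last H) \<and> path_val \<phi> H \<le> path_val \<phi> H'"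
proof (induction "length H" arbitrary: H rule: less_induct)
  case less
  show ?case
  proof (cases "distinct H")
    case True then show ?thesis using less.prems by (auto simp: paths_def)
  next
    case False
    then obtain xs ys zs y where H: "H = xs@[y]@ys@[y]@zs" using not_distinct_decomp by blast
    let ?K = "xs @ [y] @ zs"
    have len: "length ?K < length H" using H by simp
    have hd: "hd ?K = hd H" using H by (cases xs) auto
    have lst: "last ?K = last H" using H by (cases zs rule: rev_cases) auto
    obtain H' where "H' \<in> paths (hd ?K) (last ?K)" "path_val \<phi> ?K \<le> path_val \<phi> H'"
      using less.hyps[OF len] less.prems by auto
    moreover have "path_val \<phi> H \<le> path_val \<phi> ?K" using H pv_loop less.prems by simp
    ultimately show ?thesis using hd lst by auto
  qed
qed

lemma paths_finite: "finite (paths a b)"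
proof -
  have "paths a b \<subseteq> {xs. set xs \<subseteq> UNIV \<and> distinct xs}" by (auto simp: paths_def)
  moreover have "finite {xs::'a list. set xs \<subseteq> UNIV \<and> distinct xs}"
    by (rule finite_subset_distinct) simp
  ultimately show ?thesis using finite_subset by blast
qed

lemma paths_ne: "paths a b \<noteq> {}"
proof (cases "a = b")
  case True then have "[a] \<in> paths a b" by (simp add: paths_def)
  then show ?thesis by blast
next
  case False then have "[a, b] \<in> paths a b" by (simp add: paths_def)
  then show ?thesis by blast
qed

lemma lam_ge: "H \<in> paths a b \<Longrightarrow> path_val \<phi> H \<le> lam \<phi> a b"
  unfolding lam_def using paths_finite by (intro Max_ge) auto

lemma lam_attained: "\<exists>H \<in> paths a b. lam \<phi> a b = path_val \<phi> H"
proof -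
  have "lam \<phi> a b \<in> path_val \<phi> ` paths a b"
    unfolding lam_def using paths_finite paths_ne by (intro Max_in) auto
  then show ?thesis by auto
qed

lemma lam_ge_list: "mono \<phi> \<Longrightarrow> H \<noteq> [] \<Longrightarrow> hd H = a \<Longrightarrow> last H = b \<Longrightarrow> path_val \<phi> H \<le> lam \<phi> a b"
proof -
  assume a: "mono \<phi>" "H \<noteq> []" "hd H = a" "last H = b"
  then obtain H' where "H' \<in> paths a b" "path_val \<phi> H \<le> path_val \<phi> H'" using dedup[of \<phi> H] by auto
  then show ?thesis using lam_ge[of H' a b \<phi>] by linarith
qed

lemma lam_le_b: "mono \<phi> \<Longrightarrow> lam \<phi> a b \<le> \<phi> b"
  using lam_attained[of a b \<phi>] pv_le_last by (fastforce simp: paths_def)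

lemma lam_le_a: "mono \<phi> \<Longrightarrow> lam \<phi> a b \<le> \<phi> a"
  using lam_attained[of a b \<phi>] pv_le_hd by (fastforce simp: paths_def)

lemma lam_nonneg: "\<phi> \<in> M1 \<Longrightarrow> 0 \<le> lam \<phi> a b"
proof -
  assume "\<phi> \<in> M1"
  then have m: "mono \<phi>" and nn: "\<And>x. 0 \<le> \<phi> x" by (auto simp: M1_def)
  have "path_val \<phi> [a, inf a b, b] = \<phi> (inf a b)"
    by (simp add: pv_cons2 pv_single sup.absorb1 sup.absorb2)
  moreover have "path_val \<phi> [a, inf a b, b] \<le> lam \<phi> a b" by (rule lam_ge_list[OF m]) auto
  ultimately show ?thesis using nn[of "inf a b"] by linarith
qed

lemma Lambda_M1: "\<phi> \<in> M1 \<Longrightarrow> Lambda a \<phi> \<in> M1"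
proof -
  assume M: "\<phi> \<in> M1"
  then have m: "mono \<phi>" by (auto simp: M1_def)
  have nn: "\<forall>x. 0 \<le> Lambda a \<phi> x" unfolding Lambda_def using lam_le_b[OF m] by (simp add: algebra_simps)
  have "mono (Lambda a \<phi>)"
  proof (rule monoI)
    fix x y :: 'a assume xy: "x \<le> y"
    obtain H where H: "H \<in> paths a y" "lam \<phi> a y = path_val \<phi> H" using lam_attained by blast
    have "path_val \<phi> (H @ [x]) = path_val \<phi> H + path_val \<phi> [y, x] - \<phi> y"
    proof -
      have "H \<noteq> []" "last H = y" using H(1) by (auto simp: paths_def)
      then have "H = butlast H @ [y]" using append_butlast_last_id[of H] by simp
      then obtain G where "H = G @ [y]" by blast
      then show ?thesis using pv_append[of \<phi> G y "[x]"] by simp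
    qed
    moreover have "sup y x = y" using xy by (simp add: sup.absorb1)
    moreover have "path_val \<phi> [y, x] = \<phi> x + \<phi> y - \<phi> (sup y x)"
      by (simp add: pv_cons2 pv_single)
    ultimately have "path_val \<phi> (H @ [x]) = path_val \<phi> H + \<phi> x - \<phi> y"
      by simp
    moreover have "path_val \<phi> (H @ [x]) \<le> lam \<phi> a x"
      using H(1) by (intro lam_ge_list[OF m]) (auto simp: paths_def)
    ultimately have "lam \<phi> a y \<le> lam \<phi> a x + \<phi> y - \<phi> x" using H(2) by linarith
    then show "Lambda a \<phi> x \<le> Lambda a \<phi> y" unfolding Lambda_def by linarith
  qed
  then show ?thesis using nn by (simp add: M1_def)
qed

lemma Lambda_zero_id: "\<psi> \<in> M1 \<Longrightarrow> \<psi> c = 0 \<Longrightarrow> Lambda c \<psi> = \<psi>"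
proof -
  assume M: "\<psi> \<in> M1" and z: "\<psi> c = 0"
  have m: "mono \<psi>" using M by (simp add: M1_def)
  have "\<And>x. lam \<psi> c x = 0"
    using lam_le_a[OF m, of c] lam_nonneg[OF M] z by (metis order_antisym)
  then show ?thesis by (simp add: Lambda_def)
qed

lemma Lambda_keep_zero: "\<psi> \<in> M1 \<Longrightarrow> \<psi> y = 0 \<Longrightarrow> Lambda b \<psi> y = 0"
proof -
  assume M: "\<psi> \<in> M1" and z: "\<psi> y = 0"
  have m: "mono \<psi>" using M by (simp add: M1_def)
  have "lam \<psi> b y = 0"
    using lam_le_b[OF m, of b y] lam_nonneg[OF M, of b y] z by linarith
  then show ?thesis using z by (simp add: Lambda_def)
qed

lemma Lambda_self_zero: "\<psi> \<in> M1 \<Longrightarrow> c \<le> b \<Longrightarrow> Lambda b \<psi> c = 0"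
proof -
  assume M: "\<psi> \<in> M1" and cb: "c \<le> b"
  have m: "mono \<psi>" using M by (auto simp: M1_def)
  have "path_val \<psi> [b] \<le> lam \<psi> b b" by (rule lam_ge_list[OF m]) auto
  then have "Lambda b \<psi> b = 0" using lam_le_b[OF m, of b b] by (simp add: Lambda_def pv_single)
  moreover have "Lambda b \<psi> \<in> M1" by (rule Lambda_M1[OF M])
  ultimately have "Lambda b \<psi> c \<le> 0" "0 \<le> Lambda b \<psi> c" using cb by (auto simp: M1_def dest: monoD)
  then show ?thesis by linarith
qed

lemma fold_M1: "\<psi> \<in> M1 \<Longrightarrow> fold Lambda xs \<psi> \<in> M1"
  by (induction xs arbitrary: \<psi>) (auto intro: Lambda_M1)

lemma fold_zero: "\<psi> \<in> M1 \<Longrightarrow> \<psi> c = 0 \<Longrightarrow> fold Lambda xs \<psi> c = 0"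
  by (induction xs arbitrary: \<psi>) (auto intro: Lambda_M1 Lambda_keep_zero)

theorem lemma3p14:
  fixes \<phi> :: "'a::{finite,lattice} \<Rightarrow> real" and as :: "'a list"
  assumes "\<phi> \<in> M1"
    and "length as \<ge> 2"
    and "\<exists>i < length as - 1. as ! (length as - 1) \<le> as ! i"
  shows "Lambdas as \<phi> = Lambdas (butlast as) \<phi>"
proof -
  obtain pre c where as: "as = pre @ [c]" using assms(2)
    by (metis append_butlast_last_id list.size(3) not_numeral_le_zero)
  obtain i where i: "i < length pre" "c \<le> pre ! i" using assms(3) as by (auto simp: nth_append)
  have split: "pre = take i pre @ [pre ! i] @ drop (Suc i) pre"
    using i(1) by (simp add: id_take_nth_drop)
  define \<psi>1 where "\<psi>1 = fold Lambda (take i pre) \<phi>"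
  have M1: "\<psi>1 \<in> M1" unfolding \<psi>1_def by (rule fold_M1[OF assms(1)])
  define \<psi>2 where "\<psi>2 = Lambda (pre ! i) \<psi>1"
  have M2: "\<psi>2 \<in> M1" unfolding \<psi>2_def by (rule Lambda_M1[OF M1])
  have z2: "\<psi>2 c = 0" unfolding \<psi>2_def by (rule Lambda_self_zero[OF M1 i(2)])
  have eq: "fold Lambda pre \<phi> = fold Lambda (drop (Suc i) pre) \<psi>2"
    unfolding \<psi>2_def \<psi>1_def by (subst split) simp
  have "fold Lambda pre \<phi> \<in> M1" "fold Lambda pre \<phi> c = 0"
    using eq fold_M1[OF M2] fold_zero[OF M2 z2] by auto
  then have "Lambda c (fold Lambda pre \<phi>) = fold Lambda pre \<phi>" by (rule Lambda_zero_id)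
  then show ?thesis using as by (simp add: Lambdas_def)
qed

end
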